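(* In a network satisfying (H1) and (H2) containing the two connected components $Y+S_0\rightleftarrows U_1\to\cdots\rightleftarrows U_L\to Y+S_L$ and $\widetilde Y+S_L\rightleftarrows V_L\to\widetilde Y+S_{L-1}\rightleftarrows\cdots\rightleftarrows V_1\to\widetilde Y+S_0$ ($L\ge1$), with rate constants as in the context and $\tilde K_j:=\tilde b_j+\tilde c_j$, the constants $\tilde a_L,\tilde b_L,\tilde c_L$ and, for $1\le j\le L-1$, the quantities $\tilde a_j$ and $\tilde K_j$ are identifiable from $s_L$ using $\dot s_L$ and $\ddot s_L$.
   Context: Species are capital letters, concentrations lower-case letters. Mass-action system: $\dot{\mathbf{x}}=\sum_{y\to y'}k_{yy'}\mathbf{x}^y(y'-y)$, rates $k_{yy'}>0$ (vector $\mathbf{k}$). Total derivative: $\dot\varphi=\sum_i\frac{\partial\varphi}{\partial x_i}\dot x_i$ with $\dot x_i$ replaced by the right-hand side; $\varphi^{(\ell)}$ its $\ell$-th iterate. A map $\psi$ of $\mathbf{k}$ is identifiable from $x$ using orders $1\le\ell\le D$ if for positive $\mathbf{k}^*,\mathbf{k}^{**}$, $x^{(\ell)}(\mathbf{x},\mathbf{k}^* )=x^{(\ell)}(\mathbf{x},\mathbf{k}^{**})$ as polynomials in $\mathbf{x}$ for all $1\le\ell\le D$ implies $\psi(\mathbf{k}^* )=\psi(\mathbf{k}^{**})$. (H1) Every connected component has the form $Y+S_0\rightleftarrows U_1\to\cdots\rightleftarrows U_L\to Y+S_L$ (reactions $Y+S_{j-1}\to U_j$, $U_j\to Y+S_{j-1}$,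 $U_j\to Y+S_j$), unique enzyme; intermediates distinct throughout the network; non-intermediates of a component pairwise distinct but may appear in other components; each complex in a unique component. $\mathscr{S}_U$ = substrates/products of the component of intermediate $U$. (H2) A partition $\mathscr{S}^{(0)}\sqcup\cdots\sqcup\mathscr{S}^{(M)}$ ($M\ge2$, nonempty, $\mathscr{S}^{(0)}$ the intermediates) with: for each intermediate $U$ with enzyme $Y$, some $\alpha\ge1$ has $\mathscr{S}_U\subseteq\mathscr{S}^{(\alpha)}$, $Y\notin\mathscr{S}^{(\alpha)}$. Rates: first component $Y+S_{j-1}\to U_j$: $a_j$; $U_j\to Y+S_{j-1}$: $b_j$; $U_j\to Y+S_j$: $c_j$. Second component: $\widetilde Y+S_j\to V_j$: $\tilde a_j$; $V_j\to\widetilde Y+S_j$: $\tilde b_j$; $V_j\to\widetilde Y+S_{j-1}$: $\tilde c_j$ ($1\le j\le L$). *)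

theory Defs
  imports "HOL-Analysis.Analysis"
begin

text \<open>Species are elements of a finite type 'n; concentrations are vectors x :: real^'n.
  Complexes are functions 'n \<Rightarrow> nat (stoichiometric vectors); reactions are pairs (y, y').\<close>

type_synonym 'n cplx = "'n \<Rightarrow> nat"
type_synonym 'n rxn = "'n cplx \<times> 'n cplx"

definition cplx1 :: "'n \<Rightarrow> 'n cplx" where
  "cplx1 u = (\<lambda>i. if i = u then 1 else 0)"

definition cplx2 :: "'n \<Rightarrow> 'n \<Rightarrow> 'n cplx" where
  "cplx2 a b = (\<lambda>i. (if i = a then 1 else 0) + (if i = b then 1 else 0))"

definition mono :: "'n cplx \<Rightarrow> real^'n::finite \<Rightarrow> real" where
  "mono y x = (\<Prod>i\<in>UNIV. (x $ i) ^ (y i))"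

definition mak :: "'n::finite rxn set \<Rightarrow> ('n rxn \<Rightarrow> real) \<Rightarrow> real^'n \<Rightarrow> real^'n" where
  "mak R k x = (\<Sum>r\<in>R. (k r * mono (fst r) x) *\<^sub>R (\<chi> i. real (snd r i) - real (fst r i)))"

definition tdiff :: "'n::finite rxn set \<Rightarrow> ('n rxn \<Rightarrow> real) \<Rightarrow> (real^'n \<Rightarrow> real) \<Rightarrow> (real^'n \<Rightarrow> real)" where
  "tdiff R k \<phi> = (\<lambda>x. frechet_derivative \<phi> (at x) (mak R k x))"

definition identifiable :: "'n::finite rxn set \<Rightarrow> 'n \<Rightarrow> nat \<Rightarrow> (('n rxn \<Rightarrow> real) \<Rightarrow> 'b) \<Rightarrow> bool" where
  "identifiable R s D \<psi> \<longleftrightarrow>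
     (\<forall>k1 k2. (\<forall>r\<in>R. k1 r > 0) \<longrightarrow> (\<forall>r\<in>R. k2 r > 0) \<longrightarrow>
        (\<forall>l\<in>{1..D}. (tdiff R k1 ^^ l) (\<lambda>x. x $ s) = (tdiff R k2 ^^ l) (\<lambda>x. x $ s)) \<longrightarrow>
        \<psi> k1 = \<psi> k2)"

text \<open>Component c has length len c,
  enzyme E c, substrates/products Sb c 0, ..., Sb c (len c), intermediates I c 1, ..., I c (len c):
  E+S_0 <-> U_1 -> E+S_1 <-> ... <-> U_L -> E+S_L.\<close>
definition enz_network :: "'c set \<Rightarrow> ('c \<Rightarrow> nat) \<Rightarrow> ('c \<Rightarrow> 'n) \<Rightarrow> ('c \<Rightarrow> nat \<Rightarrow> 'n)
     \<Rightarrow> ('c \<Rightarrow> nat \<Rightarrow> 'n) \<Rightarrow> 'n rxn set" where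
  "enz_network C len E Sb I =
     (\<Union>c\<in>C. \<Union>j\<in>{1..len c}.
        {(cplx2 (E c) (Sb c (j - 1)), cplx1 (I c j)),
         (cplx1 (I c j), cplx2 (E c) (Sb c (j - 1))),
         (cplx1 (I c j), cplx2 (E c) (Sb c j))})"

definition is_intermediate :: "'c set \<Rightarrow> ('c \<Rightarrow> nat) \<Rightarrow> ('c \<Rightarrow> nat \<Rightarrow> 'n) \<Rightarrow> 'n \<Rightarrow> bool" where
  "is_intermediate C len I s \<longleftrightarrow> (\<exists>c\<in>C. \<exists>j\<in>{1..len c}. s = I c j)"

definition H1 :: "'c set \<Rightarrow> ('c \<Rightarrow> nat) \<Rightarrow> ('c \<Rightarrow> 'n) \<Rightarrow> ('c \<Rightarrow> nat \<Rightarrow> 'n)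
     \<Rightarrow> ('c \<Rightarrow> nat \<Rightarrow> 'n) \<Rightarrow> bool" where
  "H1 C len E Sb I \<longleftrightarrow>
     finite C \<and>
     (\<forall>c\<in>C. len c \<ge> 1) \<and>
     \<comment> \<open>intermediates distinct throughout the network\<close>
     (\<forall>c\<in>C. \<forall>c'\<in>C. \<forall>j\<in>{1..len c}. \<forall>j'\<in>{1..len c'}. I c j = I c' j' \<longrightarrow> c = c' \<and> j = j') \<and>
     \<comment> \<open>intermediates are not enzymes or substrates anywhere\<close>
     (\<forall>c\<in>C. \<forall>c'\<in>C. \<forall>j\<in>{1..len c}. I c j \<noteq> E c' \<and> (\<forall>j'\<in>{0..len c'}. I c j \<noteq> Sb c' j')) \<and>
     \<comment> \<open>non-intermediates of a component pairwise distinct\<close>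
     (\<forall>c\<in>C. inj_on (Sb c) {0..len c} \<and> E c \<notin> Sb c ` {0..len c}) \<and>
     \<comment> \<open>each complex lies in a unique component\<close>
     (\<forall>c\<in>C. \<forall>c'\<in>C. \<forall>j\<in>{0..len c}. \<forall>j'\<in>{0..len c'}.
        cplx2 (E c) (Sb c j) = cplx2 (E c') (Sb c' j') \<longrightarrow> c = c')"

text \<open>Hypothesis (H2): partition of all species into S^(0) (the intermediates), S^(1), ..., S^(M),
  M \<ge> 2, all nonempty, given by the block index function part.\<close>
definition H2 :: "'c set \<Rightarrow> ('c \<Rightarrow> nat) \<Rightarrow> ('c \<Rightarrow> 'n) \<Rightarrow> ('c \<Rightarrow> nat \<Rightarrow> 'n)
     \<Rightarrow> ('c \<Rightarrow> nat \<Rightarrow> 'n) \<Rightarrow> bool" where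
  "H2 C len E Sb I \<longleftrightarrow>
     (\<exists>M (part :: 'n \<Rightarrow> nat). M \<ge> 2 \<and> part ` UNIV = {0..M} \<and>
        (\<forall>s. part s = 0 \<longleftrightarrow> is_intermediate C len I s) \<and>
        (\<forall>c\<in>C. \<exists>\<alpha>\<ge>1. (\<forall>j\<in>{0..len c}. part (Sb c j) = \<alpha>) \<and> part (E c) \<noteq> \<alpha>))"

end

theory Submission
  imports Defs
begin

lemma cplx1_app: "cplx1 u i = (if i = u then 1 else 0)" by (simp add: cplx1_def)
lemma cplx2_app: "cplx2 a b i = (if i = a then 1 else 0) + (if i = b then 1 else 0)" by (simp add: cplx2_def)
lemma cplx2_comm: "cplx2 a b = cplx2 b a" by (auto simp: cplx2_def fun_eq_iff)
lemma cplx1_inj[simp]: "cplx1 a = cplx1 b \<longleftrightarrow> a = b"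
  by (auto simp: cplx1_def fun_eq_iff)
lemma cplx12_neq[simp]: "cplx1 w \<noteq> cplx2 a b" "cplx2 a b \<noteq> cplx1 w"
  by (auto simp: cplx1_def cplx2_def fun_eq_iff)
lemma cplx2_eqD: "a \<noteq> b \<Longrightarrow> cplx2 a b = cplx2 c d \<Longrightarrow> (a = c \<and> b = d) \<or> (a = d \<and> b = c)"
  unfolding cplx2_def fun_eq_iff
  by (metis (full_types) add_cancel_right_right add_self_div_2 one_neq_zero)

lemma mono_cplx1: "Defs.mono (cplx1 w) = (\<lambda>x. x $ w)"
proof
  fix x :: "real^'a::finite"
  have "Defs.mono (cplx1 w) x = (\<Prod>i\<in>UNIV. if i = w then x $ w else 1)"
    unfolding Defs.mono_def by (intro prod.cong) (auto simp: cplx1_def)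
  also have "\<dots> = x $ w" by (simp add: prod.delta)
  finally show "Defs.mono (cplx1 w) x = x $ w" .
qed

lemma mono_cplx2: assumes "a \<noteq> b" shows "Defs.mono (cplx2 a b) = (\<lambda>x. x $ a * x $ b)"
proof
  fix x :: "real^'a::finite"
  have "Defs.mono (cplx2 a b) x = (\<Prod>i\<in>UNIV. (if i = a then x $ a else 1) * (if i = b then x $ b else 1))"
    unfolding Defs.mono_def by (intro prod.cong) (use assms in \<open>auto simp: cplx2_def\<close>)
  also have "\<dots> = x $ a * x $ b" by (simp add: prod.distrib prod.delta)
  finally show "Defs.mono (cplx2 a b) x = x $ a * x $ b" .
qed

lemma fd_cplx1: "frechet_derivative (Defs.mono (cplx1 w)) (at x) = (\<lambda>h. h $ w)"
  unfolding mono_cplx1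
  by (rule frechet_derivative_at[symmetric]) (rule bounded_linear_imp_has_derivative, rule bounded_linear_vec_nth)

lemma fd_cplx2: assumes "a \<noteq> b"
  shows "frechet_derivative (Defs.mono (cplx2 a b)) (at x) = (\<lambda>h. x $ a * h $ b + h $ a * x $ b)"
  unfolding mono_cplx2[OF assms]
  apply (rule frechet_derivative_at[symmetric])
  apply (rule has_derivative_eq_rhs)
   apply (rule has_derivative_mult)
    apply (rule bounded_linear_imp_has_derivative, rule bounded_linear_vec_nth)+
  apply (auto simp: fun_eq_iff)
  done

definition dlt :: "'n rxn \<Rightarrow> 'n \<Rightarrow> real" where
  "dlt r i = real (snd r i) - real (fst r i)"

lemma mak_nth: "mak R k x $ i = (\<Sum>r\<in>R. k r * Defs.mono (fst r) x * dlt r i)"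
  unfolding mak_def dlt_def by simp

lemma tdiff1: "tdiff R k (\<lambda>x. x $ s) = (\<lambda>x. mak R k x $ s)"
  unfolding tdiff_def
proof
  fix x :: "real^'a::finite"
  have "((\<lambda>x. x $ s) has_derivative (\<lambda>h. h $ s)) (at x)"
    by (rule bounded_linear_imp_has_derivative, rule bounded_linear_vec_nth)
  then show "frechet_derivative (\<lambda>x. x $ s) (at x) (mak R k x) = mak R k x $ s"
    by (simp add: frechet_derivative_at[symmetric])
qed

lemma tdiff2:
  assumes "\<forall>r\<in>R. Defs.mono (fst r) differentiable (at x)"
  shows "tdiff R k (\<lambda>x. mak R k x $ s) x =
    (\<Sum>r\<in>R. k r * dlt r s * frechet_derivative (Defs.mono (fst r)) (at x) (mak R k x))"
proof -
  have "((\<lambda>x. mak R k x $ s) has_derivative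
     (\<lambda>h. \<Sum>r\<in>R. k r * dlt r s * frechet_derivative (Defs.mono (fst r)) (at x) h)) (at x)"
    unfolding mak_nth
  proof (rule has_derivative_sum)
    fix r assume "r \<in> R"
    then have "(Defs.mono (fst r) has_derivative frechet_derivative (Defs.mono (fst r)) (at x)) (at x)"
      using assms frechet_derivative_works by blast
    then have "((\<lambda>x. k r * dlt r s * Defs.mono (fst r) x) has_derivative
       (\<lambda>h. k r * dlt r s * frechet_derivative (Defs.mono (fst r)) (at x) h)) (at x)"
      by (rule has_derivative_mult_right)
    then show "((\<lambda>x. k r * Defs.mono (fst r) x * dlt r s) has_derivative
       (\<lambda>h. k r * dlt r s * frechet_derivative (Defs.mono (fst r)) (at x) h)) (at x)"
      by (simp add: ac_simps)
  qed
  then show ?thesis unfolding tdiff_def by (simp add: frechet_derivative_at[symmetric])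
qed

lemma diff_cplx1: "Defs.mono (cplx1 w) differentiable (at x)"
  unfolding mono_cplx1 by (rule bounded_linear_imp_differentiable, rule bounded_linear_vec_nth)
lemma diff_cplx2: "a \<noteq> b \<Longrightarrow> Defs.mono (cplx2 a b) differentiable (at x)"
  unfolding mono_cplx2 by (intro differentiable_mult bounded_linear_imp_differentiable bounded_linear_vec_nth)

definition pt :: "'n set \<Rightarrow> real^'n::finite" where "pt A = (\<chi> i. if i \<in> A then 1 else 0)"
lemma pt_nth[simp]: "pt A $ i = (if i \<in> A then 1 else 0)" by (simp add: pt_def)

locale netw =
  fixes C :: "'c set" and len :: "'c \<Rightarrow> nat" and E :: "'c \<Rightarrow> 'n::finite"
    and Sb I :: "'c \<Rightarrow> nat \<Rightarrow> 'n"
    and c1 c2 :: 'c and L :: nat and Y Yt :: 'n and S U V :: "nat \<Rightarrow> 'n"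
  assumes h1: "H1 C len E Sb I" and h2: "H2 C len E Sb I"
    and L: "L \<ge> 1"
    and c1: "c1 \<in> C" "len c1 = L" "E c1 = Y"
        "\<forall>j\<in>{0..L}. Sb c1 j = S j" "\<forall>j\<in>{1..L}. I c1 j = U j"
    and c2: "c2 \<in> C" "len c2 = L" "E c2 = Yt"
        "\<forall>j\<in>{0..L}. Sb c2 j = S (L - j)" "\<forall>j\<in>{1..L}. I c2 j = V (L + 1 - j)"
begin

abbreviation "R \<equiv> enz_network C len E Sb I"
abbreviation "isI \<equiv> is_intermediate C len I"
abbreviation "SS \<equiv> S ` {0..L}"

lemma finC: "finite C" using h1 unfolding H1_def by blast

lemma finR: "finite R"
  unfolding enz_network_def using finC by simp

lemma H1p:
  "\<forall>c\<in>C. \<forall>c'\<in>C. \<forall>j\<in>{1..len c}. \<forall>j'\<in>{1..len c'}. I c j = I c' j' \<longrightarrow> c = c' \<and> j = j'"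
  "\<forall>c\<in>C. \<forall>c'\<in>C. \<forall>j\<in>{1..len c}. I c j \<noteq> E c' \<and> (\<forall>j'\<in>{0..len c'}. I c j \<noteq> Sb c' j')"
  "\<forall>c\<in>C. inj_on (Sb c) {0..len c} \<and> E c \<notin> Sb c ` {0..len c}"
  "\<forall>c\<in>C. \<forall>c'\<in>C. \<forall>j\<in>{0..len c}. \<forall>j'\<in>{0..len c'}.
        cplx2 (E c) (Sb c j) = cplx2 (E c') (Sb c' j') \<longrightarrow> c = c'"
  using h1 unfolding H1_def by blast+

lemma I_inj: "c \<in> C \<Longrightarrow> c' \<in> C \<Longrightarrow> j \<in> {1..len c} \<Longrightarrow> j' \<in> {1..len c'} \<Longrightarrow> I c j = I c' j' \<Longrightarrow> c = c' \<and> j = j'"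
  using H1p(1) by blast

lemma E_notI: "\<not> isI (E c)" if "c \<in> C"
proof
  assume "isI (E c)"
  then obtain c' j where "c' \<in> C" "j \<in> {1..len c'}" "E c = I c' j" unfolding is_intermediate_def by blast
  then show False using H1p(2) that by metis
qed

lemma Sb_notI: "\<not> isI (Sb c j)" if "c \<in> C" "j \<le> len c"
proof
  assume "isI (Sb c j)"
  then obtain c' j' where "c' \<in> C" "j' \<in> {1..len c'}" "Sb c j = I c' j'" unfolding is_intermediate_def by blast
  moreover have "j \<in> {0..len c}" using that by simp
  ultimately show False using H1p(2) that by metis
qed

lemma Sb_inj: "c \<in> C \<Longrightarrow> j \<le> len c \<Longrightarrow> j' \<le> len c \<Longrightarrow> Sb c j = Sb c j' \<Longrightarrow> j = j'"
  using H1p(3) unfolding inj_on_def by simp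

lemma E_Sb: "c \<in> C \<Longrightarrow> j \<le> len c \<Longrightarrow> E c \<noteq> Sb c j"
  using H1p(3) by force

lemma cuniq: "c \<in> C \<Longrightarrow> c' \<in> C \<Longrightarrow> j \<le> len c \<Longrightarrow> j' \<le> len c' \<Longrightarrow>
   cplx2 (E c) (Sb c j) = cplx2 (E c') (Sb c' j') \<Longrightarrow> c = c'"
  using H1p(4) by (meson atLeastAtMost_iff le0)

lemma S1: "j \<le> L \<Longrightarrow> Sb c1 j = S j" using c1 by auto
lemma S2: "j \<le> L \<Longrightarrow> Sb c2 j = S (L - j)" using c2 by auto

lemma S_notI: "i \<le> L \<Longrightarrow> \<not> isI (S i)"
  using Sb_notI[OF c1(1), of i] c1 S1 by simp

lemma Yt_notI: "\<not> isI Yt" using E_notI[OF c2(1)] c2 by simp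

lemma S_inj: "i \<le> L \<Longrightarrow> j \<le> L \<Longrightarrow> S i = S j \<Longrightarrow> i = j"
  using Sb_inj[OF c1(1), of i j] c1 S1 by simp

lemma Yt_S: "i \<le> L \<Longrightarrow> Yt \<noteq> S i"
  using E_Sb[OF c2(1), of "L - i"] c2 S2[of "L - i"] by simp

lemma V_I: "m \<in> {1..L} \<Longrightarrow> V m = I c2 (L + 1 - m)"
proof -
  assume m: "m \<in> {1..L}"
  have "L + 1 - m \<in> {1..L}" "L + 1 - (L + 1 - m) = m" using m by auto
  then show ?thesis using c2(5) by metis
qed

lemma V_isI: "isI (V m)" if "m \<in> {1..L}"
  unfolding is_intermediate_def using V_I c2(2)
  by (intro bexI[OF _ c2(1)] bexI[where x="L + 1 - m"]) (simp, simp add: c2(2), use that in auto)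

lemma V_inj: "m \<in> {1..L} \<Longrightarrow> m' \<in> {1..L} \<Longrightarrow> V m = V m' \<Longrightarrow> m = m'"
proof -
  assume m: "m \<in> {1..L}" "m' \<in> {1..L}" "V m = V m'"
  then have "I c2 (L + 1 - m) = I c2 (L + 1 - m')" using V_I by metis
  moreover have "L + 1 - m \<in> {1..len c2}" "L + 1 - m' \<in> {1..len c2}" using m c2(2) by auto
  ultimately have "L + 1 - m = L + 1 - m'" using I_inj[OF c2(1) c2(1)] by blast
  then show "m = m'" using m by auto
qed

lemma noSS: assumes "c \<in> C" "j \<le> len c" "E c \<in> SS" shows "Sb c j \<notin> SS"
proof
  assume "Sb c j \<in> SS"
  obtain part :: "'n \<Rightarrow> nat" where P: "(\<forall>c\<in>C. \<exists>\<alpha>\<ge>1. (\<forall>j\<in>{0..len c}. part (Sb c j) = \<alpha>) \<and> part (E c) \<noteq> \<alpha>)"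
    using h2 unfolding H2_def by blast
  obtain \<alpha>1 where "\<forall>j\<in>{0..len c1}. part (Sb c1 j) = \<alpha>1"
    using P c1(1) by blast
  then have a1: "\<forall>j\<in>{0..L}. part (S j) = \<alpha>1" using c1(2,4) by auto
  obtain \<alpha> where a: "\<forall>j\<in>{0..len c}. part (Sb c j) = \<alpha>" "part (E c) \<noteq> \<alpha>" using P assms(1) by blast
  have "part (Sb c j) = \<alpha>1" using \<open>Sb c j \<in> SS\<close> a1 by auto
  moreover have "part (E c) = \<alpha>1" using assms(3) a1 by auto
  ultimately show False using a assms(2) by auto
qed


abbreviation "fa m \<equiv> (cplx2 Yt (S m), cplx1 (V m))"
abbreviation "fb m \<equiv> (cplx1 (V m), cplx2 Yt (S m))"
abbreviation "fc m \<equiv> (cplx1 (V m), cplx2 Yt (S (m - 1)))"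

lemma RC: "r \<in> R \<Longrightarrow> \<exists>c\<in>C. \<exists>j\<in>{1..len c}. r = (cplx2 (E c) (Sb c (j - 1)), cplx1 (I c j)) \<or>
   r = (cplx1 (I c j), cplx2 (E c) (Sb c (j - 1))) \<or> r = (cplx1 (I c j), cplx2 (E c) (Sb c j))"
  unfolding enz_network_def by blast

lemma c2_idx: assumes "m \<in> {1..L}"
  shows "L + 1 - m \<in> {1..len c2}" "Sb c2 (L + 1 - m - 1) = S m" "Sb c2 (L + 1 - m) = S (m - 1)"
    "I c2 (L + 1 - m) = V m"
proof -
  show "L + 1 - m \<in> {1..len c2}" using assms c2(2) by auto
  have "L + 1 - m - 1 \<le> L" "L - (L + 1 - m - 1) = m" using assms by auto
  then show "Sb c2 (L + 1 - m - 1) = S m" using S2 by metis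
  have "L + 1 - m \<le> L" "L - (L + 1 - m) = m - 1" using assms by auto
  then show "Sb c2 (L + 1 - m) = S (m - 1)" using S2 by metis
  show "I c2 (L + 1 - m) = V m" using V_I assms by simp
qed

lemma memR: assumes "m \<in> {1..L}" shows "fa m \<in> R" "fb m \<in> R" "fc m \<in> R"
  using c2_idx[OF assms] c2(1,3) unfolding enz_network_def by (auto intro!: bexI[of _ c2] bexI[of _ "L + 1 - m"])

definition "P3 e s w \<longleftrightarrow> e \<noteq> s \<and> isI w \<and> \<not> isI e \<and> \<not> isI s \<and> \<not> (e \<in> SS \<and> s \<in> SS)"

lemma RS: assumes "r \<in> R"
  shows "(\<exists>e s w. r = (cplx2 e s, cplx1 w) \<and> P3 e s w) \<or> (\<exists>e s w. r = (cplx1 w, cplx2 e s) \<and> P3 e s w)"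
proof -
  obtain c j where cj: "c \<in> C" "j \<in> {1..len c}" and
    r: "r = (cplx2 (E c) (Sb c (j - 1)), cplx1 (I c j)) \<or>
   r = (cplx1 (I c j), cplx2 (E c) (Sb c (j - 1))) \<or> r = (cplx1 (I c j), cplx2 (E c) (Sb c j))"
    using RC[OF assms] by blast
  have iI: "isI (I c j)" unfolding is_intermediate_def using cj by blast
  have p: "P3 (E c) (Sb c i) (I c j)" if "i \<le> len c" for i
    unfolding P3_def using iI E_Sb[OF cj(1) that] E_notI[OF cj(1)] Sb_notI[OF cj(1) that] noSS[OF cj(1) that] by blast
  have "j - 1 \<le> len c" "j \<le> len c" using cj by auto
  then show ?thesis using r p by blast
qed

lemma RV: assumes "r \<in> R" "fst r = cplx1 (V m)" "m \<in> {1..L}" shows "r = fb m \<or> r = fc m"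
proof -
  obtain c j where cj: "c \<in> C" "j \<in> {1..len c}" and
    r: "r = (cplx2 (E c) (Sb c (j - 1)), cplx1 (I c j)) \<or>
   r = (cplx1 (I c j), cplx2 (E c) (Sb c (j - 1))) \<or> r = (cplx1 (I c j), cplx2 (E c) (Sb c j))"
    using RC[OF assms(1)] by blast
  then have "I c j = V m" using assms(2) by auto
  then have "I c j = I c2 (L + 1 - m)" using c2_idx[OF assms(3)] by simp
  then have "c = c2" "j = L + 1 - m" using I_inj[OF cj(1) c2(1) cj(2) c2_idx(1)[OF assms(3)]] by auto
  then show ?thesis using r assms(2) c2_idx[OF assms(3)] c2(3) by auto
qed

lemma RA: assumes "r \<in> R" "fst r = cplx2 Yt (S m)" "m \<in> {1..L}" shows "r = fa m"
proof -
  obtain c j where cj: "c \<in> C" "j \<in> {1..len c}" and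
    r: "r = (cplx2 (E c) (Sb c (j - 1)), cplx1 (I c j)) \<or>
   r = (cplx1 (I c j), cplx2 (E c) (Sb c (j - 1))) \<or> r = (cplx1 (I c j), cplx2 (E c) (Sb c j))"
    using RC[OF assms(1)] by blast
  then have r1: "r = (cplx2 (E c) (Sb c (j - 1)), cplx1 (I c j))" using assms(2) by auto
  have j1: "j - 1 \<le> len c" using cj by auto
  have m1: "L + 1 - m - 1 \<le> len c2" using c2(2) by auto
  have eq: "cplx2 (E c) (Sb c (j - 1)) = cplx2 (E c2) (Sb c2 (L + 1 - m - 1))"
    using r1 assms(2) c2_idx[OF assms(3)] c2(3) by simp
  then have cc: "c = c2" using cuniq[OF cj(1) c2(1) j1 m1] by blast
  have "E c2 \<noteq> Sb c2 (j - 1)" using E_Sb[OF c2(1)] j1 cc by blast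
  then have "Sb c2 (j - 1) = Sb c2 (L + 1 - m - 1) \<or> (E c2 = Sb c2 (L + 1 - m - 1))"
    using cplx2_eqD[OF _ eq[unfolded cc]] by blast
  moreover have "E c2 \<noteq> Sb c2 (L + 1 - m - 1)" using E_Sb[OF c2(1) m1] .
  ultimately have "Sb c2 (j - 1) = Sb c2 (L + 1 - m - 1)" by blast
  then have "j - 1 = L + 1 - m - 1" using Sb_inj[OF c2(1) _ m1] j1 cc by blast
  then have "j = L + 1 - m" using cj assms(3) by auto
  then show ?thesis using r1 cc c2_idx[OF assms(3)] c2(3) by simp
qed


lemma sum_loc:
  assumes "finite R" "T \<subseteq> R" "\<And>r. r \<in> R \<Longrightarrow> g r \<noteq> 0 \<Longrightarrow> r \<in> T"
  shows "sum g R = sum g T"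
  using sum.mono_neutral_right[OF assms(1,2), of g] assms(3) by (metis DiffE)

lemma isI_neq: "isI w \<Longrightarrow> w \<noteq> Yt" "isI w \<Longrightarrow> i \<le> L \<Longrightarrow> w \<noteq> S i"
  using Yt_notI S_notI by auto

lemma diffR: "r \<in> R \<Longrightarrow> Defs.mono (fst r) differentiable (at x)"
  using RS[of r] diff_cplx1 diff_cplx2 unfolding P3_def by force

definition "F1 k x = (\<Sum>r\<in>R. k r * Defs.mono (fst r) x * dlt r (S L))"
definition "F2 k x = (\<Sum>r\<in>R. k r * dlt r (S L) * frechet_derivative (Defs.mono (fst r)) (at x) (mak R k x))"

lemma iter1: "(tdiff R k ^^ 1) (\<lambda>x. x $ S L) = F1 k"
  by (simp add: tdiff1 mak_nth F1_def fun_eq_iff)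

lemma iter2: "(tdiff R k ^^ 2) (\<lambda>x. x $ S L) = F2 k"
  by (simp add: numeral_2_eq_2 tdiff1 fun_eq_iff F2_def tdiff2 diffR)

lemma SL: "S L \<in> SS" "L \<le> L" by auto

lemma P1: "F1 k (pt {Yt, S L}) = - k (fa L)"
proof -
  let ?x = "pt {Yt, S L}"
  have L1: "L \<in> {1..L}" using L by simp
  have "F1 k ?x = (\<Sum>r\<in>{fa L}. k r * Defs.mono (fst r) ?x * dlt r (S L))"
    unfolding F1_def
  proof (rule sum_loc[OF finR])
    show "{fa L} \<subseteq> R" using memR[OF L1] by simp
    fix r assume r: "r \<in> R" and nz: "k r * Defs.mono (fst r) ?x * dlt r (S L) \<noteq> 0"
    then have nz': "Defs.mono (fst r) ?x \<noteq> 0" by auto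
    from RS[OF r] show "r \<in> {fa L}"
    proof (elim disjE exE conjE)
      fix e s w assume rr: "r = (cplx2 e s, cplx1 w)" and p: "P3 e s w"
      have me: "Defs.mono (cplx2 e s) = (\<lambda>x. x $ e * x $ s)" using p mono_cplx2 unfolding P3_def by blast
      have "?x $ e * ?x $ s \<noteq> 0" using nz' by (simp only: rr me fst_conv not_False_eq_True)
      then have "e \<in> {Yt, S L}" "s \<in> {Yt, S L}" "e \<noteq> s"
        using nz' p unfolding P3_def by (auto split: if_splits)
      then have "fst r = cplx2 Yt (S L)" using rr cplx2_comm by auto
      then show ?thesis using RA[OF r _ L1] by simp
    next
      fix e s w assume rr: "r = (cplx1 w, cplx2 e s)" and p: "P3 e s w"
      then have "w \<in> {Yt, S L}" using nz' by (simp add: mono_cplx1 split: if_splits)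
      then show ?thesis using p isI_neq unfolding P3_def by auto
    qed
  qed
  also have "\<dots> = - k (fa L)"
    using mono_cplx2[OF Yt_S[OF SL(2)]] Yt_S[OF SL(2)] isI_neq(2)[OF V_isI[OF L1] SL(2)]
    by (simp add: dlt_def cplx1_app cplx2_app)
  finally show ?thesis .
qed


lemma F1_mak: "F1 k x = mak R k x $ S L" by (simp add: F1_def mak_nth)

lemma Sneq: "i \<le> L \<Longrightarrow> j \<le> L \<Longrightarrow> i \<noteq> j \<Longrightarrow> S i \<noteq> S j"
  using S_inj by blast

lemma fbc_neq: assumes m: "m \<in> {1..L}" shows "fb m \<noteq> fc m"
proof
  assume "fb m = fc m"
  then have "cplx2 Yt (S m) = cplx2 Yt (S (m - 1))" by simp
  then have "S m = S (m - 1) \<or> Yt = S (m - 1)" using cplx2_eqD[OF Yt_S] m by fastforce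
  moreover have "S m \<noteq> S (m - 1)" using m by (intro Sneq) auto
  moreover have "Yt \<noteq> S (m - 1)" using m by (intro Yt_S) auto
  ultimately show False by blast
qed

lemma suppV: assumes m: "m \<in> {1..L}" and r: "r \<in> R" and nz: "Defs.mono (fst r) (pt {V m}) \<noteq> 0"
  shows "r \<in> {fb m, fc m}"
  using RS[OF r]
proof (elim disjE exE conjE)
  fix e s w assume rr: "r = (cplx2 e s, cplx1 w)" and p: "P3 e s w"
  have me: "Defs.mono (cplx2 e s) = (\<lambda>x. x $ e * x $ s)" using p mono_cplx2 unfolding P3_def by blast
  have "e \<noteq> V m" using p V_isI[OF m] unfolding P3_def by auto
  then have False using nz by (simp add: rr me)
  then show ?thesis ..
next
  fix e s w assume rr: "r = (cplx1 w, cplx2 e s)" and p: "P3 e s w"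
  then have "w = V m" using nz by (simp add: mono_cplx1 split: if_splits)
  then show ?thesis using RV[OF r _ m] rr by auto
qed

lemma hV: assumes m: "m \<in> {1..L}"
  shows "mak R k (pt {V m}) $ i = k (fb m) * dlt (fb m) i + k (fc m) * dlt (fc m) i"
proof -
  have "mak R k (pt {V m}) $ i = (\<Sum>r\<in>{fb m, fc m}. k r * Defs.mono (fst r) (pt {V m}) * dlt r i)"
    unfolding mak_nth
    by (rule sum_loc[OF finR]) (use memR[OF m] suppV[OF m] in auto)
  then show ?thesis using fbc_neq[OF m] by (simp add: mono_cplx1)
qed

lemma P2: "F1 k (pt {V L}) = k (fb L)"
proof -
  have L1: "L \<in> {1..L}" using L by simp
  have "S (L - 1) \<noteq> S L" using S_inj[of "L - 1" L] L by auto
  then show ?thesis unfolding F1_mak hV[OF L1]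
    using Yt_S[OF SL(2)] isI_neq(2)[OF V_isI[OF L1] SL(2)]
    by (simp add: dlt_def cplx1_app cplx2_app)
qed

lemma P3: "F2 k (pt {V L}) = - k (fb L) * (k (fb L) + k (fc L))"
proof -
  have L1: "L \<in> {1..L}" using L by simp
  let ?x = "pt {V L}" let ?h = "mak R k ?x"
  have hw: "?h $ w = 0" if "isI w" "w \<noteq> V L" for w
    unfolding hV[OF L1] using that isI_neq[OF that(1)] L
    by (simp add: dlt_def cplx1_app cplx2_app)
  have hVL: "?h $ V L = - k (fb L) - k (fc L)" unfolding hV[OF L1]
    using isI_neq[OF V_isI[OF L1]] L by (simp add: dlt_def cplx1_app cplx2_app)
  have "F2 k ?x = (\<Sum>r\<in>{fb L, fc L}. k r * dlt r (S L) * frechet_derivative (Defs.mono (fst r)) (at ?x) ?h)"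
    unfolding F2_def
  proof (rule sum_loc[OF finR])
    show "{fb L, fc L} \<subseteq> R" using memR[OF L1] by simp
    fix r assume r: "r \<in> R" and nz: "k r * dlt r (S L) * frechet_derivative (Defs.mono (fst r)) (at ?x) ?h \<noteq> 0"
    from RS[OF r] show "r \<in> {fb L, fc L}"
    proof (elim disjE exE conjE)
      fix e s w assume rr: "r = (cplx2 e s, cplx1 w)" and p: "P3 e s w"
      have "e \<noteq> V L" "s \<noteq> V L" using p V_isI[OF L1] unfolding P3_def by auto
      moreover have "frechet_derivative (Defs.mono (cplx2 e s)) (at ?x) = (\<lambda>h. ?x $ e * h $ s + h $ e * ?x $ s)"
        using p fd_cplx2 unfolding P3_def by blast
      ultimately have False using nz by (simp add: rr)
      then show ?thesis ..
    next
      fix e s w assume rr: "r = (cplx1 w, cplx2 e s)" and p: "P3 e s w"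
      have "?h $ w \<noteq> 0" using nz by (simp add: rr fd_cplx1)
      then have "w = V L" using hw p unfolding P3_def by blast
      then show ?thesis using RV[OF r _ L1] rr by auto
    qed
  qed
  also have "\<dots> = k (fb L) * ?h $ V L"
  proof -
    have "S (L - 1) \<noteq> S L" using S_inj[of "L - 1" L] L by auto
    then show ?thesis using fbc_neq[OF L1] Yt_S[OF SL(2)] isI_neq(2)[OF V_isI[OF L1] SL(2)]
      by (simp add: fd_cplx1 dlt_def cplx1_app cplx2_app)
  qed
  also have "\<dots> = - k (fb L) * (k (fb L) + k (fc L))" unfolding hVL by (simp add: algebra_simps)
  finally show ?thesis .
qed


lemma caseA_SL: assumes rr: "r = (cplx2 e s, cplx1 w)" and p: "P3 e s w" and nz: "dlt r (S L) \<noteq> 0"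
  shows "\<exists>z. fst r = cplx2 (S L) z \<and> z \<noteq> S L \<and> \<not> isI z \<and> z \<notin> SS \<and> dlt r (S L) = -1"
proof -
  have wS: "w \<noteq> S L" using p isI_neq(2)[OF _ SL(2)] unfolding P3_def by blast
  have "S L = e \<or> S L = s" using nz wS by (auto simp: rr dlt_def cplx1_app cplx2_app split: if_splits)
  then show ?thesis
  proof
    assume "S L = e"
    then show ?thesis using p wS rr SL(1) unfolding P3_def
      by (intro exI[of _ s]) (auto simp: dlt_def cplx1_app cplx2_app)
  next
    assume "S L = s"
    then show ?thesis using p wS rr SL(1) cplx2_comm unfolding P3_def
      by (intro exI[of _ e]) (auto simp: dlt_def cplx1_app cplx2_app)
  qed
qed

lemma fdA: assumes "fst r = cplx2 a b" "a \<noteq> b"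
  shows "frechet_derivative (Defs.mono (fst r)) (at x) h = x $ a * h $ b + h $ a * x $ b"
  using fd_cplx2[OF assms(2)] assms(1) by simp

lemma P4: assumes j: "j \<in> {1..L - 1}"
  shows "F2 k (pt {S L, V j}) = - k (fa L) * (k (fb j) + k (fc j))"
proof -
  have L1: "L \<in> {1..L}" using L by simp
  have j1: "j \<in> {1..L}" using j by auto
  have ar: "j \<le> L" "j \<noteq> L" "j - 1 \<le> L" "j - 1 \<noteq> L" using j by auto
  have SjL: "S j \<noteq> S L" "S (j - 1) \<noteq> S L" using Sneq[OF ar(1) SL(2) ar(2)] Sneq[OF ar(3) SL(2) ar(4)] by auto
  have VjL: "isI (V j)" using V_isI[OF j1] .
  have nVj: "V j \<noteq> S L" "V j \<noteq> Yt" "V j \<noteq> S j" "V j \<noteq> S (j - 1)"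
    using isI_neq(1)[OF VjL] isI_neq(2)[OF VjL SL(2)] isI_neq(2)[OF VjL ar(1)] isI_neq(2)[OF VjL ar(3)] by auto
  have YS: "Yt \<noteq> S L" "Yt \<noteq> S j" "Yt \<noteq> S (j - 1)" using Yt_S SL(2) ar by auto
  let ?A = "{S L, V j}"
  let ?x = "pt ?A" let ?h = "mak R k ?x"
  have supp: "r \<in> {fb j, fc j}" if r: "r \<in> R" and nz: "Defs.mono (fst r) ?x \<noteq> 0" for r
    using RS[OF r]
  proof (elim disjE exE conjE)
    fix e s w assume rr: "r = (cplx2 e s, cplx1 w)" and p: "P3 e s w"
    have me: "Defs.mono (cplx2 e s) = (\<lambda>x. x $ e * x $ s)" using p mono_cplx2 unfolding P3_def by blast
    have "e \<in> ?A" "s \<in> ?A" using nz by (simp_all add: rr me split: if_splits)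
    then have False using p VjL unfolding P3_def by auto
    then show ?thesis ..
  next
    fix e s w assume rr: "r = (cplx1 w, cplx2 e s)" and p: "P3 e s w"
    then have "w \<in> ?A" using nz by (simp add: mono_cplx1 split: if_splits)
    then have "w = V j" using p isI_neq(2)[OF _ SL(2)] unfolding P3_def by auto
    then show ?thesis using RV[OF r _ j1] rr by auto
  qed
  have hh: "?h $ i = k (fb j) * dlt (fb j) i + k (fc j) * dlt (fc j) i" for i
  proof -
    have "?h $ i = (\<Sum>r\<in>{fb j, fc j}. k r * Defs.mono (fst r) ?x * dlt r i)"
      unfolding mak_nth
      by (rule sum_loc[OF finR]) (use memR[OF j1] supp in auto)
    then show ?thesis using fbc_neq[OF j1] by (simp add: mono_cplx1)
  qed
  have hsupp: "z \<in> {Yt, S j, S (j - 1), V j}" if "?h $ z \<noteq> 0" for z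
    using that unfolding hh by (auto simp: dlt_def cplx1_app cplx2_app split: if_splits)
  have hSL: "?h $ S L = 0" unfolding hh using SjL YS nVj by (simp add: dlt_def cplx1_app cplx2_app)
  have hYt: "?h $ Yt = k (fb j) + k (fc j)" unfolding hh using SjL YS nVj by (simp add: dlt_def cplx1_app cplx2_app)
  have "F2 k ?x = (\<Sum>r\<in>{fa L}. k r * dlt r (S L) * frechet_derivative (Defs.mono (fst r)) (at ?x) ?h)"
    unfolding F2_def
  proof (rule sum_loc[OF finR])
    show "{fa L} \<subseteq> R" using memR[OF L1] by simp
    fix r assume r: "r \<in> R" and nz: "k r * dlt r (S L) * frechet_derivative (Defs.mono (fst r)) (at ?x) ?h \<noteq> 0"
    from RS[OF r] show "r \<in> {fa L}"
    proof (elim disjE exE conjE)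
      fix e s w assume rr: "r = (cplx2 e s, cplx1 w)" and p: "P3 e s w"
      obtain z where z: "fst r = cplx2 (S L) z" "z \<noteq> S L" "\<not> isI z" "z \<notin> SS"
        using caseA_SL[OF rr p] nz by auto
      have "?x $ S L * ?h $ z + ?h $ S L * ?x $ z \<noteq> 0" using nz fdA[OF z(1) z(2)[symmetric]] by auto
      then have "?h $ z \<noteq> 0" using hSL by simp
      moreover have "S j \<in> SS" "S (j - 1) \<in> SS" using ar by auto
      ultimately have "z = Yt" using hsupp z(3,4) VjL by blast
      then have "fst r = cplx2 Yt (S L)" using z(1) cplx2_comm by metis
      then show ?thesis using RA[OF r _ L1] by auto
    next
      fix e s w assume rr: "r = (cplx1 w, cplx2 e s)" and p: "P3 e s w"
      have "?h $ w \<noteq> 0" using nz by (simp add: rr fd_cplx1)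
      moreover have "isI w" using p unfolding P3_def by blast
      ultimately have "w = V j" using hsupp isI_neq(1)[of w] isI_neq(2)[of w j] isI_neq(2)[of w "j - 1"] ar by blast
      then have "r = fb j \<or> r = fc j" using RV[OF r _ j1] rr by auto
      then have "dlt r (S L) = 0" using SjL YS nVj by (auto simp: dlt_def cplx1_app cplx2_app)
      then show ?thesis using nz by simp
    qed
  qed
  also have "\<dots> = - k (fa L) * (k (fb j) + k (fc j))"
    using fdA[of "fa L" Yt "S L"] YS hSL hYt isI_neq(2)[OF V_isI[OF L1] SL(2)]
    by (simp add: dlt_def cplx1_app cplx2_app)
  finally show ?thesis .
qed


lemma P5: assumes j: "j \<in> {1..L - 1}"
  shows "F2 k (pt {Yt, S L, S j}) = k (fa L) * (2 * k (fa L) + k (fa j) + k (fb L))"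
proof -
  have L1: "L \<in> {1..L}" using L by simp
  have j1: "j \<in> {1..L}" using j by auto
  have ar: "j \<le> L" "j \<noteq> L" "j - 1 \<le> L" "j - 1 \<noteq> L" "L - 1 \<le> L" "L - 1 \<noteq> L" using j by auto
  have SjL: "S j \<noteq> S L" "S (j - 1) \<noteq> S L" "S (L - 1) \<noteq> S L"
    using Sneq[OF ar(1) SL(2) ar(2)] Sneq[OF ar(3) SL(2) ar(4)] Sneq[OF ar(5) SL(2) ar(6)] by auto
  have VjL: "isI (V j)" using V_isI[OF j1] .
  have VLI: "isI (V L)" using V_isI[OF L1] .
  have VV: "V j \<noteq> V L" using V_inj[OF j1 L1] ar(2) by blast
  have nVj: "V j \<noteq> S L" "V j \<noteq> Yt" "V j \<noteq> S j"
    using isI_neq(1)[OF VjL] isI_neq(2)[OF VjL SL(2)] isI_neq(2)[OF VjL ar(1)] by auto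
  have nVL: "V L \<noteq> S L" "V L \<noteq> Yt" "V L \<noteq> S j"
    using isI_neq(1)[OF VLI] isI_neq(2)[OF VLI SL(2)] isI_neq(2)[OF VLI ar(1)] by auto
  have YS: "Yt \<noteq> S L" "Yt \<noteq> S j" "Yt \<noteq> S (j - 1)" "Yt \<noteq> S (L - 1)" using Yt_S SL(2) ar by auto
  have inSS: "S j \<in> SS" "S L \<in> SS" using ar by auto
  let ?A = "{Yt, S L, S j}"
  let ?x = "pt ?A" let ?h = "mak R k ?x"
  have supp: "r \<in> {fa L, fa j}" if r: "r \<in> R" and nz: "Defs.mono (fst r) ?x \<noteq> 0" for r
    using RS[OF r]
  proof (elim disjE exE conjE)
    fix e s w assume rr: "r = (cplx2 e s, cplx1 w)" and p: "P3 e s w"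
    have me: "Defs.mono (cplx2 e s) = (\<lambda>x. x $ e * x $ s)" using p mono_cplx2 unfolding P3_def by blast
    have "e \<in> ?A" "s \<in> ?A" using nz by (simp_all add: rr me split: if_splits)
    then have "(e = Yt \<and> s \<in> {S L, S j}) \<or> (s = Yt \<and> e \<in> {S L, S j})"
      using p inSS unfolding P3_def by auto
    then have "fst r = cplx2 Yt (S L) \<or> fst r = cplx2 Yt (S j)"
      using rr cplx2_comm[of "S L" Yt] cplx2_comm[of "S j" Yt] by auto
    then show ?thesis using RA[OF r _ L1] RA[OF r _ j1] by auto
  next
    fix e s w assume rr: "r = (cplx1 w, cplx2 e s)" and p: "P3 e s w"
    then have "w \<in> ?A" using nz by (simp add: mono_cplx1 split: if_splits)
    then have False using p isI_neq(1)[of w] isI_neq(2)[OF _ SL(2), of w] isI_neq(2)[OF _ ar(1), of w]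
      unfolding P3_def by auto
    then show ?thesis ..
  qed
  have faneq: "fa L \<noteq> fa j" using VV by simp
  have hh: "?h $ i = k (fa L) * dlt (fa L) i + k (fa j) * dlt (fa j) i" for i
  proof -
    have "?h $ i = (\<Sum>r\<in>{fa L, fa j}. k r * Defs.mono (fst r) ?x * dlt r i)"
      unfolding mak_nth
      by (rule sum_loc[OF finR]) (use memR[OF j1] memR[OF L1] supp in auto)
    then show ?thesis using faneq mono_cplx2[OF YS(1)] mono_cplx2[OF YS(2)] by simp
  qed
  have hsupp: "z \<in> {Yt, S L, S j, V L, V j}" if "?h $ z \<noteq> 0" for z
    using that unfolding hh by (auto simp: dlt_def cplx1_app cplx2_app split: if_splits)
  have hSL: "?h $ S L = - k (fa L)" unfolding hh using SjL YS nVj nVL by (simp add: dlt_def cplx1_app cplx2_app)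
  have hYt: "?h $ Yt = - k (fa L) - k (fa j)" unfolding hh using SjL YS nVj nVL by (simp add: dlt_def cplx1_app cplx2_app)
  have hVL: "?h $ V L = k (fa L)" unfolding hh using SjL YS nVj nVL VV by (simp add: dlt_def cplx1_app cplx2_app)
  have "F2 k ?x = (\<Sum>r\<in>{fa L, fb L}. k r * dlt r (S L) * frechet_derivative (Defs.mono (fst r)) (at ?x) ?h)"
    unfolding F2_def
  proof (rule sum_loc[OF finR])
    show "{fa L, fb L} \<subseteq> R" using memR[OF L1] by simp
    fix r assume r: "r \<in> R" and nz: "k r * dlt r (S L) * frechet_derivative (Defs.mono (fst r)) (at ?x) ?h \<noteq> 0"
    from RS[OF r] show "r \<in> {fa L, fb L}"
    proof (elim disjE exE conjE)
      fix e s w assume rr: "r = (cplx2 e s, cplx1 w)" and p: "P3 e s w"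
      obtain z where z: "fst r = cplx2 (S L) z" "z \<noteq> S L" "\<not> isI z" "z \<notin> SS"
        using caseA_SL[OF rr p] nz by auto
      have "?x $ S L * ?h $ z + ?h $ S L * ?x $ z \<noteq> 0" using nz fdA[OF z(1) z(2)[symmetric]] by auto
      then have "?h $ z \<noteq> 0 \<or> z \<in> ?A" by (auto split: if_splits)
      then have "z = Yt" using hsupp z(2,3,4) VjL VLI inSS by blast
      then have "fst r = cplx2 Yt (S L)" using z(1) cplx2_comm by metis
      then show ?thesis using RA[OF r _ L1] by auto
    next
      fix e s w assume rr: "r = (cplx1 w, cplx2 e s)" and p: "P3 e s w"
      have "?h $ w \<noteq> 0" using nz by (simp add: rr fd_cplx1)
      moreover have "isI w" using p unfolding P3_def by blast
      ultimately have "w = V L \<or> w = V j" using hsupp isI_neq(1)[of w] isI_neq(2)[of w j] isI_neq(2)[of w L] ar by blast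
      then have "r = fb L \<or> r = fc L \<or> r = fb j \<or> r = fc j" using RV[OF r _ j1] RV[OF r _ L1] rr by auto
      moreover have "dlt (fc L) (S L) = 0" "dlt (fb j) (S L) = 0" "dlt (fc j) (S L) = 0"
        using SjL YS nVj nVL by (auto simp: dlt_def cplx1_app cplx2_app)
      ultimately show ?thesis using nz by auto
    qed
  qed
  also have "\<dots> = k (fa L) * (-1) * (?h $ S L + ?h $ Yt) + k (fb L) * ?h $ V L"
    using fdA[of "fa L" Yt "S L"] YS nVL SjL
    by (simp add: dlt_def cplx1_app cplx2_app fd_cplx1)
  also have "\<dots> = k (fa L) * (2 * k (fa L) + k (fa j) + k (fb L))" unfolding hVL hSL hYt by (simp add: algebra_simps)
  finally show ?thesis .
qed


lemma ident_gen:
  assumes "\<And>k1 k2. (\<forall>r\<in>R. k1 r > 0) \<Longrightarrow> (\<forall>r\<in>R. k2 r > 0) \<Longrightarrow> F1 k1 = F1 k2 \<Longrightarrow> F2 k1 = F2 k2 \<Longrightarrow> \<psi> k1 = \<psi> k2"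
  shows "identifiable R (S L) 2 \<psi>"
  unfolding identifiable_def
proof (intro allI impI)
  fix k1 k2 :: "'n rxn \<Rightarrow> real"
  assume p1: "\<forall>r\<in>R. 0 < k1 r" and p2: "\<forall>r\<in>R. 0 < k2 r"
    and eq: "\<forall>l\<in>{1..2}. (tdiff R k1 ^^ l) (\<lambda>x. x $ S L) = (tdiff R k2 ^^ l) (\<lambda>x. x $ S L)"
  have "1 \<in> {1..(2::nat)}" "2 \<in> {1..(2::nat)}" by auto
  then have "(tdiff R k1 ^^ 1) (\<lambda>x. x $ S L) = (tdiff R k2 ^^ 1) (\<lambda>x. x $ S L)"
     "(tdiff R k1 ^^ 2) (\<lambda>x. x $ S L) = (tdiff R k2 ^^ 2) (\<lambda>x. x $ S L)" using eq by blast+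
  then have "F1 k1 = F1 k2" "F2 k1 = F2 k2" unfolding iter1 iter2 by blast+
  then show "\<psi> k1 = \<psi> k2" using assms p1 p2 by blast
qed

lemma main:
  shows
    "identifiable R (S L) 2 (\<lambda>k. k (cplx2 Yt (S L), cplx1 (V L)))
     \<and> identifiable R (S L) 2 (\<lambda>k. k (cplx1 (V L), cplx2 Yt (S L)))
     \<and> identifiable R (S L) 2 (\<lambda>k. k (cplx1 (V L), cplx2 Yt (S (L - 1))))
     \<and> (\<forall>j\<in>{1..L - 1}.
          identifiable R (S L) 2 (\<lambda>k. k (cplx2 Yt (S j), cplx1 (V j)))
        \<and> identifiable R (S L) 2
            (\<lambda>k. k (cplx1 (V j), cplx2 Yt (S j)) + k (cplx1 (V j), cplx2 Yt (S (j - 1)))))"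
proof -
  have L1: "L \<in> {1..L}" using L by simp
  have A: "k1 (fa L) = k2 (fa L)" if "F1 k1 = F1 k2" for k1 k2 :: "'n rxn \<Rightarrow> real"
    using P1[of k1] P1[of k2] that by simp
  have B: "k1 (fb L) = k2 (fb L)" if "F1 k1 = F1 k2" for k1 k2 :: "'n rxn \<Rightarrow> real"
    using P2[of k1] P2[of k2] that by simp
  have C: "k1 (fc L) = k2 (fc L)" if "F1 k1 = F1 k2" "F2 k1 = F2 k2" "\<forall>r\<in>R. k1 r > 0"
    for k1 k2 :: "'n rxn \<Rightarrow> real"
  proof -
    have b: "k1 (fb L) = k2 (fb L)" using B[OF that(1)] .
    have pos: "k1 (fb L) > 0" using that(3) memR[OF L1] by blast
    have "F2 k1 (pt {V L}) = F2 k2 (pt {V L})" using that(2) by simp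
    then have "- k1 (fb L) * (k1 (fb L) + k1 (fc L)) = - k2 (fb L) * (k2 (fb L) + k2 (fc L))"
      unfolding P3 .
    then have "k1 (fb L) * (k1 (fc L) - k2 (fc L)) = 0" using b by (simp add: algebra_simps) metis
    then show ?thesis using pos by simp
  qed
  have D: "k1 (fb j) + k1 (fc j) = k2 (fb j) + k2 (fc j)"
    if j: "j \<in> {1..L - 1}" and "F1 k1 = F1 k2" "F2 k1 = F2 k2" "\<forall>r\<in>R. k1 r > 0"
    for j and k1 k2 :: "'n rxn \<Rightarrow> real"
  proof -
    have a: "k1 (fa L) = k2 (fa L)" using A[OF that(2)] .
    have pos: "k1 (fa L) > 0" using that(4) memR[OF L1] by blast
    have "- k1 (fa L) * (k1 (fb j) + k1 (fc j)) = - k1 (fa L) * (k2 (fb j) + k2 (fc j))"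
      using P4[OF j, of k1] P4[OF j, of k2] that(3) a by simp metis
    then show ?thesis using pos a by auto
  qed
  have Ej: "k1 (fa j) = k2 (fa j)"
    if j: "j \<in> {1..L - 1}" and "F1 k1 = F1 k2" "F2 k1 = F2 k2" "\<forall>r\<in>R. k1 r > 0"
    for j and k1 k2 :: "'n rxn \<Rightarrow> real"
  proof -
    have a: "k1 (fa L) = k2 (fa L)" using A[OF that(2)] .
    have b: "k1 (fb L) = k2 (fb L)" using B[OF that(2)] .
    have pos: "k1 (fa L) > 0" using that(4) memR[OF L1] by blast
    have "k1 (fa L) * (2 * k1 (fa L) + k1 (fa j) + k1 (fb L)) = k1 (fa L) * (2 * k1 (fa L) + k2 (fa j) + k1 (fb L))"
      using P5[OF j, of k1] P5[OF j, of k2] that(3) a b by simp metis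
    then show ?thesis using pos a b by auto
  qed
  show ?thesis
    using A B C D Ej by (intro conjI ballI ident_gen) blast+
qed

end

theorem mainTheorem12:
  fixes C :: "'c set" and len :: "'c \<Rightarrow> nat" and E :: "'c \<Rightarrow> 'n::finite"
    and Sb I :: "'c \<Rightarrow> nat \<Rightarrow> 'n"
    and c1 c2 :: 'c and L :: nat and Y Yt :: 'n and S U V :: "nat \<Rightarrow> 'n"
  assumes h1: "H1 C len E Sb I" and h2: "H2 C len E Sb I"
    and L: "L \<ge> 1"
    and c1: "c1 \<in> C" "len c1 = L" "E c1 = Y"
        "\<forall>j\<in>{0..L}. Sb c1 j = S j" "\<forall>j\<in>{1..L}. I c1 j = U j"
    and c2: "c2 \<in> C" "len c2 = L" "E c2 = Yt"
        "\<forall>j\<in>{0..L}. Sb c2 j = S (L - j)" "\<forall>j\<in>{1..L}. I c2 j = V (L + 1 - j)"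
  shows
    "identifiable (enz_network C len E Sb I) (S L) 2
        (\<lambda>k. k (cplx2 Yt (S L), cplx1 (V L)))
     \<and> identifiable (enz_network C len E Sb I) (S L) 2
        (\<lambda>k. k (cplx1 (V L), cplx2 Yt (S L)))
     \<and> identifiable (enz_network C len E Sb I) (S L) 2
        (\<lambda>k. k (cplx1 (V L), cplx2 Yt (S (L - 1))))
     \<and> (\<forall>j\<in>{1..L - 1}.
          identifiable (enz_network C len E Sb I) (S L) 2
            (\<lambda>k. k (cplx2 Yt (S j), cplx1 (V j)))
        \<and> identifiable (enz_network C len E Sb I) (S L) 2
            (\<lambda>k. k (cplx1 (V j), cplx2 Yt (S j)) + k (cplx1 (V j), cplx2 Yt (S (j - 1)))))"
proof -
  interpret n: netw C len E Sb I c1 c2 L Y Yt S U V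
    by (rule netw.intro) (use h1 h2 L c1 c2 in auto)
  show ?thesis using n.main by simp
qed

end
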